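(* Let $q\ge 2$, and let $\mathcal{C}\subseteq \Sigma^n$ be a code over an alphabet $\Sigma$ of size $q$ with $|\mathcal{C}|=q^k$ and locality $r$. Suppose $s:=n \bmod (r+1)\notin\{0,1\}$, and let $m:=\lceil n/(r+1)\rceil$. Suppose $\mathcal{C}$ has $m$ pairwise disjoint repair groups $A_1,\dots,A_m\subseteq\{1,\dots,n\}$ with $|A_i|=r+1$ for $i=1,\dots,m-1$ and $|A_m|=s$. If either $r\mid k$, or $r\nmid k$ and $k \bmod r\ge s$, then the minimum Hamming distance of $\mathcal{C}$ satisfies $$d_{\min}(\mathcal{C})\le n-k-\Big\lceil\frac{k}{r}\Big\rceil+1.$$
   Context: A code $\mathcal{C}$ of length $n$ has locality $r$ if for every coordinate $i\in\{1,\dots,n\}$ there is a set $I_i\subseteq\{1,\dots,n\}\setminus\{i\}$ with $|I_i|=r$ such that for every codeword $c=(c_1,\dots,c_n)\in\mathcal{C}$, $c_i$ is a function of $(c_l)_{l\in I_i}$; such a code with $|\mathcal{C}|=q^k$ is called an $(n,k,r)$ LRC code. A repair group is a subset $A\subseteq\{1,\dots,n\}$ such that for every $j\in A$ and every codeword $c$, the coordinate $c_j$ is a function of $(c_l)_{l\in A\setminus\{j\}}$. *)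

theory Defs
  imports Complex_Main
begin

text \<open>Codewords are lists of length n over the alphabet Alph; coordinates are 0..<n.\<close>

definition is_code :: "'a set \<Rightarrow> nat \<Rightarrow> 'a list set \<Rightarrow> bool" where
  "is_code Alph n C \<longleftrightarrow> (\<forall>c\<in>C. length c = n \<and> set c \<subseteq> Alph)"

definition determined_by :: "'a list set \<Rightarrow> nat set \<Rightarrow> nat \<Rightarrow> bool" where
  "determined_by C I i \<longleftrightarrow>
     (\<forall>c\<in>C. \<forall>c'\<in>C. (\<forall>l\<in>I. c ! l = c' ! l) \<longrightarrow> c ! i = c' ! i)"

definition has_locality :: "nat \<Rightarrow> 'a list set \<Rightarrow> nat \<Rightarrow> bool" where
  "has_locality n C r \<longleftrightarrow>
     (\<forall>i<n. \<exists>I. I \<subseteq> {0..<n} - {i} \<and> card I = r \<and> determined_by C I i)"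

definition repair_group :: "nat \<Rightarrow> 'a list set \<Rightarrow> nat set \<Rightarrow> bool" where
  "repair_group n C A \<longleftrightarrow>
     A \<subseteq> {0..<n} \<and> (\<forall>j\<in>A. determined_by C (A - {j}) j)"

definition hamming_dist :: "nat \<Rightarrow> 'a list \<Rightarrow> 'a list \<Rightarrow> nat" where
  "hamming_dist n c c' = card {i. i < n \<and> c ! i \<noteq> c' ! i}"

definition dmin :: "nat \<Rightarrow> 'a list set \<Rightarrow> nat" where
  "dmin n C = Min {hamming_dist n c c' | c c'. c \<in> C \<and> c' \<in> C \<and> c \<noteq> c'}"

end

theory Submission
  imports Defs "HOL-Library.FuncSet"
begin

lemma code_finite:
  assumes "finite Alph" "is_code Alph n C"
  shows "finite C"
proof -
  have "C \<subseteq> {xs. set xs \<subseteq> Alph \<and> length xs = n}"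
    using assms(2) unfolding is_code_def by auto
  moreover have "finite {xs. set xs \<subseteq> Alph \<and> length xs = n}"
    using finite_lists_length_eq[OF assms(1)] by simp
  ultimately show ?thesis by (rule finite_subset)
qed

lemma proj_bound:
  fixes C :: "'a list set"
  assumes fa: "finite Alph" and ca: "card Alph = q" and code: "is_code Alph n C"
    and fG: "finite G" and rg: "\<forall>i\<in>G. repair_group n C (B i)"
    and ne: "\<forall>i\<in>G. B i \<noteq> {}"
    and dj: "\<forall>i\<in>G. \<forall>i'\<in>G. i \<noteq> i' \<longrightarrow> B i \<inter> B i' = {}"
    and sub: "\<forall>i\<in>G. B i \<subseteq> T" and T: "T \<subseteq> {0..<n}"
  shows "card ((\<lambda>c. restrict ((!) c) T) ` C) \<le> q ^ (card T - card G)"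
proof -
  have "\<forall>i\<in>G. \<exists>x. x \<in> B i" using ne by blast
  then obtain j where j: "\<forall>i\<in>G. j i \<in> B i" by metis
  define S where "S = T - j ` G"
  have fT: "finite T" using T finite_subset by blast
  have injj: "inj_on j G"
  proof (rule inj_onI, rule ccontr)
    fix x y assume xy: "x \<in> G" "y \<in> G" "j x = j y" "x \<noteq> y"
    then have "j x \<in> B x \<inter> B y" using j by (metis IntI)
    then show False using dj xy by (metis empty_iff)
  qed
  have jG: "j ` G \<subseteq> T" using j sub by blast
  have cS: "card S = card T - card G"
    unfolding S_def using card_Diff_subset[OF finite_subset[OF jG fT] jG] card_image[OF injj]
    by simp
  define PS where "PS = (\<lambda>c::'a list. restrict ((!) c) S)"
  define PT where "PT = (\<lambda>c::'a list. restrict ((!) c) T)"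
  have key: "PT c = PT c'" if cc: "c \<in> C" "c' \<in> C" and eq: "PS c = PS c'" for c c'
  proof -
    have eqS: "c ! l = c' ! l" if "l \<in> S" for l
      using fun_cong[OF eq, of l] that unfolding PS_def by simp
    have "c ! l = c' ! l" if l: "l \<in> T" for l
    proof (cases "l \<in> S")
      case True then show ?thesis by (rule eqS)
    next
      case False
      then obtain i where i: "i \<in> G" "l = j i" using l S_def by blast
      have det: "determined_by C (B i - {j i}) (j i)"
        using rg i j unfolding repair_group_def by blast
      have "\<forall>l'\<in>B i - {j i}. c ! l' = c' ! l'"
      proof
        fix l' assume l': "l' \<in> B i - {j i}"
        have "l' \<notin> j ` G"
        proof
          assume "l' \<in> j ` G"
          then obtain i' where i': "i' \<in> G" "l' = j i'" by blast
          then have "i' \<noteq> i" using l' by auto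
          moreover have "l' \<in> B i'" using i' j by simp
          moreover have "l' \<in> B i" using l' by simp
          ultimately show False using dj i(1) i'(1) by (metis IntI empty_iff)
        qed
        then have "l' \<in> S" using l' sub i S_def by blast
        then show "c ! l' = c' ! l'" by (rule eqS)
      qed
      then show ?thesis using det cc i unfolding determined_by_def by blast
    qed
    then show ?thesis unfolding PT_def restrict_def by auto
  qed
  define h where "h x = PT (SOME c. c \<in> C \<and> PS c = x)" for x
  have "PT ` C = h ` PS ` C"
  proof -
    have "PT c = h (PS c)" if "c \<in> C" for c
    proof -
      have ex: "\<exists>c'. c' \<in> C \<and> PS c' = PS c" using that by blast
      have "(SOME c'. c' \<in> C \<and> PS c' = PS c) \<in> C \<and> PS (SOME c'. c' \<in> C \<and> PS c' = PS c) = PS c"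
        using someI_ex[OF ex] .
      then have "PT (SOME c'. c' \<in> C \<and> PS c' = PS c) = PT c"
        using key[OF _ that] by blast
      then show ?thesis unfolding h_def by simp
    qed
    then show ?thesis by (simp add: image_image cong: image_cong)
  qed
  moreover have "finite (PS ` C)" using code_finite[OF fa code] by simp
  ultimately have "card (PT ` C) \<le> card (PS ` C)" using card_image_le by simp
  also have "PS ` C \<subseteq> Pi\<^sub>E S (\<lambda>_. Alph)"
  proof
    fix x assume "x \<in> PS ` C"
    then obtain c where c: "c \<in> C" "x = PS c" by blast
    have "c ! l \<in> Alph" if "l \<in> S" for l
    proof -
      have "l < n" using that T S_def by auto
      then show ?thesis using c code unfolding is_code_def by (metis nth_mem subsetD)
    qed
    then show "x \<in> Pi\<^sub>E S (\<lambda>_. Alph)" using c unfolding PS_def by auto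
  qed
  then have "card (PS ` C) \<le> card (Pi\<^sub>E S (\<lambda>_. Alph))"
    by (intro card_mono finite_PiE) (use fT fa S_def in auto)
  also have "\<dots> = q ^ card S" using card_PiE[of S "\<lambda>_. Alph"] fT S_def ca by simp
  finally show ?thesis unfolding PT_def cS .
qed

lemma dist_bound:
  fixes C :: "'a list set"
  assumes fa: "finite Alph" and code: "is_code Alph n C" and T: "T \<subseteq> {0..<n}"
    and lt: "card ((\<lambda>c. restrict ((!) c) T) ` C) < card C"
  shows "dmin n C \<le> n - card T"
proof -
  define PT where "PT = (\<lambda>c::'a list. restrict ((!) c) T)"
  have "\<not> inj_on PT C" using lt card_image unfolding PT_def by fastforce
  then obtain c c' where cc: "c \<in> C" "c' \<in> C" "c \<noteq> c'" "PT c = PT c'"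
    unfolding inj_on_def by blast
  have "{i. i < n \<and> c ! i \<noteq> c' ! i} \<subseteq> {0..<n} - T"
  proof
    fix i assume i: "i \<in> {i. i < n \<and> c ! i \<noteq> c' ! i}"
    have "i \<notin> T"
    proof
      assume "i \<in> T"
      then show False using fun_cong[OF cc(4), of i] i unfolding PT_def by simp
    qed
    then show "i \<in> {0..<n} - T" using i by simp
  qed
  then have hd: "hamming_dist n c c' \<le> n - card T"
    unfolding hamming_dist_def
    using card_mono[of "{0..<n} - T"] card_Diff_subset[of T "{0..<n}"] T finite_subset[OF T]
    by fastforce
  define D where "D = {hamming_dist n c c' | c c'. c \<in> C \<and> c' \<in> C \<and> c \<noteq> c'}"
  have "D \<subseteq> {..n}"
  proof
    fix x assume "x \<in> D"
    then obtain a b :: "'a list" where "x = hamming_dist n a b" unfolding D_def by auto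
    moreover have "card {i. i < n \<and> a ! i \<noteq> b ! i} \<le> card {0..<n}"
      by (rule card_mono) auto
    ultimately show "x \<in> {..n}" unfolding hamming_dist_def by simp
  qed
  then have fD: "finite D" using finite_subset by blast
  have "hamming_dist n c c' \<in> D" unfolding D_def using cc by blast
  then have "dmin n C \<le> hamming_dist n c c'" unfolding dmin_def D_def[symmetric]
    using Min_le fD by blast
  then show ?thesis using hd by simp
qed

lemma core:
  fixes C :: "'a list set" and A :: "nat \<Rightarrow> nat set"
  assumes fa: "finite Alph" and ca: "card Alph = q" and q2: "q \<ge> 2"
    and code: "is_code Alph n C" and cC: "card C = q ^ k" and k1: "k \<ge> 1"
    and rg: "\<forall>i\<in>{1..m}. repair_group n C (A i)"
    and dj: "\<forall>i\<in>{1..m}. \<forall>i'\<in>{1..m}. i \<noteq> i' \<longrightarrow> A i \<inter> A i' = {}"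
    and full: "\<forall>i\<in>{1..<m}. card (A i) = r + 1"
    and last: "card (A m) = s" and s1: "s \<ge> 1"
    and jm: "j + 1 < m" and er: "e \<le> r + 1" and sumk: "j * r + s + e = k"
  shows "dmin n C \<le> n - (k + j)"
proof -
  define G where "G = {1..j} \<union> {m}"
  have GS: "G \<subseteq> {1..m}" using jm G_def by auto
  have fG: "finite G" using G_def by simp
  have cG: "card G = j + 1" using jm G_def by simp
  have cA: "card (A i) > 0" if "i \<in> {1..m}" for i
  proof (cases "i = m")
    case True then show ?thesis using last s1 by simp
  next
    case False then show ?thesis using that full by simp
  qed
  then have finA: "finite (A i)" if "i \<in> {1..m}" for i using that card_ge_0_finite by blast
  have j1: "j + 1 \<in> {1..<m}" using jm by simp
  then have "e \<le> card (A (j + 1))" using full er by simp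
  then obtain E where E: "E \<subseteq> A (j + 1)" "card E = e" "finite E"
    by (metis obtain_subset_with_card_n)
  define U where "U = (\<Union>i\<in>G. A i)"
  define T where "T = U \<union> E"
  have cU: "card U = (\<Sum>i\<in>G. card (A i))" unfolding U_def
    by (rule card_UN_disjoint) (use fG finA GS dj in blast)+
  also have "\<dots> = (\<Sum>i\<in>{1..j}. card (A i)) + card (A m)"
    unfolding G_def using jm by (subst sum.union_disjoint) auto
  also have "(\<Sum>i\<in>{1..j}. card (A i)) = (\<Sum>i\<in>{1..j}. r + 1)"
    by (rule sum.cong) (use full jm in auto)
  finally have cU2: "card U = j * (r + 1) + s" using last by simp
  have UE: "U \<inter> E = {}"
  proof -
    have "A i \<inter> A (j + 1) = {}" if "i \<in> G" for i
    proof -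
      have "i \<noteq> j + 1" using that G_def jm by auto
      moreover have "i \<in> {1..m}" "j + 1 \<in> {1..m}" using that GS j1 by auto
      ultimately show ?thesis using dj by blast
    qed
    then show ?thesis unfolding U_def using E by blast
  qed
  have fU: "finite U" unfolding U_def using fG finA GS by blast
  have cT: "card T = k + j" unfolding T_def
    using card_Un_disjoint[OF fU E(3) UE] cU2 E(2) sumk by (simp add: algebra_simps)
  have Tsub: "T \<subseteq> {0..<n}"
  proof -
    have "A i \<subseteq> {0..<n}" if "i \<in> {1..m}" for i using rg that unfolding repair_group_def by blast
    then show ?thesis unfolding T_def U_def using GS E(1) j1 by force
  qed
  have "card ((\<lambda>c. restrict ((!) c) T) ` C) \<le> q ^ (card T - card G)"
  proof (rule proj_bound[OF fa ca code fG])
    show "\<forall>i\<in>G. repair_group n C (A i)" using rg GS by blast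
    show "\<forall>i\<in>G. A i \<noteq> {}" using cA GS by fastforce
    show "\<forall>i\<in>G. \<forall>i'\<in>G. i \<noteq> i' \<longrightarrow> A i \<inter> A i' = {}" using dj GS by blast
    show "\<forall>i\<in>G. A i \<subseteq> T" unfolding T_def U_def by blast
    show "T \<subseteq> {0..<n}" by (rule Tsub)
  qed
  also have "card T - card G = k - 1" using cT cG by simp
  also have "q ^ (k - 1) < q ^ k" using q2 k1 by (intro power_strict_increasing) auto
  finally have "card ((\<lambda>c. restrict ((!) c) T) ` C) < card C" unfolding cC .
  then have "dmin n C \<le> n - card T" by (rule dist_bound[OF fa code Tsub])
  then show ?thesis using cT by simp
qed

theorem theorem2:
  fixes Alph :: "'a set" and C :: "'a list set" and q n k r :: nat
    and A :: "nat \<Rightarrow> nat set"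
  assumes "finite Alph" and "card Alph = q" and "q \<ge> 2"
    and "is_code Alph n C" and "card C = q ^ k" and "k \<ge> 1"
    and "has_locality n C r"
    and "n mod (r + 1) \<notin> {0, 1}"
    and "\<forall>i\<in>{1..nat \<lceil>real n / real (r + 1)\<rceil>}. repair_group n C (A i)"
    and "\<forall>i\<in>{1..nat \<lceil>real n / real (r + 1)\<rceil>}. \<forall>j\<in>{1..nat \<lceil>real n / real (r + 1)\<rceil>}.
           i \<noteq> j \<longrightarrow> A i \<inter> A j = {}"
    and "\<forall>i\<in>{1..<nat \<lceil>real n / real (r + 1)\<rceil>}. card (A i) = r + 1"
    and "card (A (nat \<lceil>real n / real (r + 1)\<rceil>)) = n mod (r + 1)"
    and "r dvd k \<or> (\<not> r dvd k \<and> k mod r \<ge> n mod (r + 1))"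
  shows "int (dmin n C) \<le> int n - int k - \<lceil>real k / real r\<rceil> + 1"
proof -
  note fa = assms(1) and ca = assms(2) and q2 = assms(3) and code = assms(4)
    and cC = assms(5) and k1 = assms(6)
  define s where "s = n mod (r + 1)"
  define a where "a = n div (r + 1)"
  have s2: "s \<ge> 2" using assms(8) s_def by auto
  have sr: "s < r + 1" unfolding s_def by simp
  have na: "n = a * (r + 1) + s" unfolding a_def s_def by (rule div_mult_mod_eq[symmetric])
  have r2: "r \<ge> 2" using s2 sr by simp
  have ceil: "\<lceil>real n / real (r + 1)\<rceil> = int a + 1"
  proof (rule ceiling_unique)
    have rn: "real n = real a * (real r + 1) + real s" using na by (simp add: algebra_simps)
    have p: "real r + 1 > 0" by simp
    show "real_of_int (int a + 1) - 1 < real n / real (r + 1)"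
      using s2 p by (simp add: rn field_simps)
    show "real n / real (r + 1) \<le> real_of_int (int a + 1)"
      using sr p by (simp add: rn field_simps)
  qed
  define m where "m = a + 1"
  have M: "nat \<lceil>real n / real (r + 1)\<rceil> = m" using ceil m_def by simp
  note rg = assms(9)[unfolded M] and dj = assms(10)[unfolded M]
    and full = assms(11)[unfolded M] and last = assms(12)[unfolded M, folded s_def]
  have kb: "k \<le> a * r + s - 1"
  proof -
    define P where "P = (\<lambda>c::'a list. restrict ((!) c) {0..<n})"
    have inj: "inj_on P C"
    proof (rule inj_onI)
      fix c c' assume cc: "c \<in> C" "c' \<in> C" "P c = P c'"
      have "length c = n" "length c' = n" using cc code unfolding is_code_def by auto
      moreover have "c ! l = c' ! l" if "l < n" for l
        using fun_cong[OF cc(3), of l] that unfolding P_def by simp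
      ultimately show "c = c'" by (metis nth_equalityI)
    qed
    have "card (P ` C) \<le> q ^ (card {0..<n} - card {1..m})"
      unfolding P_def
    proof (rule proj_bound[OF fa ca code])
      show "finite {1..m}" by simp
      show "\<forall>i\<in>{1..m}. repair_group n C (A i)" by (rule rg)
      show "\<forall>i\<in>{1..m}. A i \<noteq> {}"
      proof
        fix i assume i: "i \<in> {1..m}"
        show "A i \<noteq> {}"
        proof (cases "i = m")
          case True then show ?thesis using last s2 by auto
        next
          case False
          then have "i \<in> {1..<m}" using i by simp
          then have "card (A i) = r + 1" using full by blast
          then show ?thesis by (metis card.empty add_is_0 one_neq_zero)
        qed
      qed
      show "\<forall>i\<in>{1..m}. \<forall>i'\<in>{1..m}. i \<noteq> i' \<longrightarrow> A i \<inter> A i' = {}" by (rule dj)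
      show "\<forall>i\<in>{1..m}. A i \<subseteq> {0..<n}" using rg unfolding repair_group_def by blast
    qed auto
    then have "q ^ k \<le> q ^ (n - m)" using card_image[OF inj] cC by simp
    then have "k \<le> n - m" using q2 by (metis power_le_imp_le_exp Suc_1 Suc_le_lessD)
    then show ?thesis using na m_def s2 by (simp add: algebra_simps)
  qed
  have fin: "int (dmin n C) \<le> int n - int k - \<lceil>real k / real r\<rceil> + 1"
    if j: "j + 1 < m" "e \<le> r + 1" "j * r + s + e = k" "\<lceil>real k / real r\<rceil> = int j + 1" for j e
  proof -
    have d: "dmin n C \<le> n - (k + j)"
      by (rule core[OF fa ca q2 code cC k1 rg dj full last _ j(1) j(2) j(3)]) (use s2 in simp)
    have "k + j \<le> n" using kb j(1) na m_def s2 by (simp add: algebra_simps)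
    then show ?thesis using d j(4) by linarith
  qed
  show ?thesis
  proof (cases "r dvd k")
    case True
    then obtain t where t: "k = r * t" by blast
    have t1: "t \<ge> 1" using t k1 by (cases t) auto
    have ta: "t < a + 1"
    proof (rule ccontr)
      assume "\<not> t < a + 1"
      then have "(a + 1) * r \<le> t * r" by (intro mult_le_mono1) simp
      moreover have "(a + 1) * r = a * r + r" by simp
      moreover have "t * r = k" using t by simp
      ultimately show False using kb sr s2 by linarith
    qed
    show ?thesis
    proof (rule fin[of "t - 1" "r - s"])
      show "t - 1 + 1 < m" using ta t1 m_def by simp
      show "r - s \<le> r + 1" by simp
      show "(t - 1) * r + s + (r - s) = k" using t t1 sr
        by (cases t) (auto simp: algebra_simps)
      have "real k / real r = real t" using t r2 by simp
      then show "\<lceil>real k / real r\<rceil> = int (t - 1) + 1" using t1 by simp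
    qed
  next
    case False
    then have us: "k mod r \<ge> s" using assms(13) s_def by simp
    define t where "t = k div r"
    define u where "u = k mod r"
    have ku: "k = t * r + u" unfolding t_def u_def by simp
    have u0: "u > 0" using False u_def by (metis dvd_eq_mod_eq_0 gr0I)
    have ur: "u < r" using r2 u_def by simp
    have ta: "t < a"
    proof (rule ccontr)
      assume "\<not> t < a"
      then have "a * r \<le> t * r" by (intro mult_le_mono1) simp
      then show False using kb ku us u_def s2 by linarith
    qed
    show ?thesis
    proof (rule fin[of t "u - s"])
      show "t + 1 < m" using ta m_def by simp
      show "u - s \<le> r + 1" using ur by simp
      show "t * r + s + (u - s) = k" using ku us u_def by simp
      show "\<lceil>real k / real r\<rceil> = int t + 1"
      proof (rule ceiling_unique)
        have rk: "real k = real t * real r + real u" using ku by simp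
        have p: "real r > 0" using r2 by simp
        show "real_of_int (int t + 1) - 1 < real k / real r"
          using u0 p by (simp add: rk field_simps)
        show "real k / real r \<le> real_of_int (int t + 1)"
          using ur p by (simp add: rk field_simps)
      qed
    qed
  qed
qed

end
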